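(* Let $L$ be a positive integer and let $\{a_i(k)\}_{i\in\mathbb Z_L}$, $k\in\mathcal K=\mathbb Z_L$, be binary sequences. Let $s\ge2$ be an integer and $W(s)\ge0$ a number such that for all distinct keys $k_1,\ldots,k_s\in\mathcal K$ and all bits $b_1,\ldots,b_s$, $$|A_{b_1\ldots b_s}(k_1,\ldots,k_s)|\le \frac{L}{2^s}+W(s).$$ Let $0<\gamma<1$ with $\gamma L$ an integer, and set $L'=L\bigl(1+2^sW(s)/L\bigr)=L+2^sW(s)$, $\gamma'=\gamma\bigl(1+2^sW(s)/L\bigr)^{-1}$ (so $\gamma'L'=\gamma L$). Let $r$ be the integer with $P_s(r)\le\gamma'/2<P_s(r+1)$. Then for every $T\subset\mathbb Z_L$ with $|T|=\gamma L$, every $g:T\to\{0,1\}$ and every $s$ distinct keys $k_1,\ldots,k_s$, $$\min_{1\le i\le s}\bigl|\{j\in T: g(j)=a_j(k_i)\}\bigr|\le n_{\rm correct}(\gamma,\varepsilon):=L'\Bigl\{P_{s-1}(r)+\frac{s-r-1}{s}\bigl(\gamma'-2P_s(r)\bigr)\Bigr\},$$ where $\varepsilon=s/|\mathcal K|$. Consequently, fewer than $s$ keys $k$ satisfy $|\{j\in T:g(j)=a_j(k)\}|>n_{\rm correct}(\gamma,\varepsilon)$, so for a uniformly random key the number of correctly guessed bits does not exceed $n_{\rm correct}(\gamma,\varepsilon)$ with probability at least $1-\varepsilon$.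
   Context: $\mathbb Z_L=\{0,\ldots,L-1\}$ is the residue ring modulo $L$. For distinct keys $k_1,\ldots,k_s$ and bits $b_1,\ldots,b_s$, $A_{b_1\ldots b_s}(k_1,\ldots,k_s)=\{i\in\mathbb Z_L: a_i(k_1)=b_1,\ldots,a_i(k_s)=b_s\}$. For integers $s\ge1$ and $t$, $P_s(t)=2^{-s}\sum_{u=0}^{t}\binom{s}{u}$ is the cumulative distribution function of a binomial random variable with $s$ trials and success probability $1/2$ ($P_s(t)=0$ for $t<0$). *)

theory Defs
  imports Complex_Main
begin

text \<open>Binary sequences: a k i is the bit a_i(k) for key k and index i in Z_L = {0..<L}.
 A set for distinct keys ks (list of length s) and bits bs.\<close>
definition Aset :: "nat \<Rightarrow> (nat \<Rightarrow> nat \<Rightarrow> bool) \<Rightarrow> nat list \<Rightarrow> bool list \<Rightarrow> nat set" where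
  "Aset L a ks bs = {i \<in> {..<L}. \<forall>t<length ks. a (ks ! t) i = bs ! t}"

definition Pbin :: "nat \<Rightarrow> int \<Rightarrow> real" where
  "Pbin s t = (if t < 0 then 0 else (\<Sum>u\<in>{0..nat t}. real (s choose u)) / 2 ^ s)"

definition ncorr :: "(nat \<Rightarrow> nat \<Rightarrow> bool) \<Rightarrow> nat set \<Rightarrow> (nat \<Rightarrow> bool) \<Rightarrow> nat \<Rightarrow> nat" where
  "ncorr a T g k = card {j \<in> T. g j = a k j}"

end

theory Submission
  imports Defs
begin


lemma count_split:
  fixes T :: "nat set"
  assumes "finite T"
  shows "(\<Sum>i<s. ncorr a T g (ks ! i)) + (\<Sum>j\<in>T. card {i. i < s \<and> g j \<noteq> a (ks ! i) j}) = s * card T"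
proof -
  have c1: "card {i. i < s \<and> P i} = (\<Sum>i<s. if P i then 1 else 0)" for P :: "nat \<Rightarrow> bool"
  proof -
    have "{i. i < s \<and> P i} = {i\<in>{..<s}. P i}" by auto
    then show ?thesis by (simp add: sum.inter_filter[symmetric])
  qed
  have c2: "card {j\<in>T. P j} = (\<Sum>j\<in>T. if P j then 1 else 0)" for P :: "nat \<Rightarrow> bool"
    using assms by (simp add: sum.inter_filter[symmetric])
  have "(\<Sum>j\<in>T. card {i. i < s \<and> g j \<noteq> a (ks ! i) j})
      = (\<Sum>j\<in>T. \<Sum>i<s. if g j \<noteq> a (ks ! i) j then 1 else 0)" by (simp add: c1)
  also have "\<dots> = (\<Sum>i<s. \<Sum>j\<in>T. if g j \<noteq> a (ks ! i) j then 1 else 0)" by (rule sum.swap)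
  also have "\<dots> = (\<Sum>i<s. card {j\<in>T. g j \<noteq> a (ks ! i) j})" by (simp add: c2)
  finally have e: "(\<Sum>j\<in>T. card {i. i < s \<and> g j \<noteq> a (ks ! i) j}) = (\<Sum>i<s. card {j\<in>T. g j \<noteq> a (ks ! i) j})" .
  have "ncorr a T g k + card {j\<in>T. g j \<noteq> a k j} = card T" for k
  proof -
    have "card {j\<in>T. g j = a k j} + card {j\<in>T. g j \<noteq> a k j} = card ({j\<in>T. g j = a k j} \<union> {j\<in>T. g j \<noteq> a k j})"
      using assms by (intro card_Un_disjoint[symmetric]) auto
    also have "{j\<in>T. g j = a k j} \<union> {j\<in>T. g j \<noteq> a k j} = T" by auto
    finally show ?thesis by (simp add: ncorr_def)
  qed
  then show ?thesis unfolding e by (simp add: sum.distrib[symmetric])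
qed



lemma dis_bound:
  fixes T :: "nat set" and dis :: "nat \<Rightarrow> nat set" and c :: real and R s :: nat
  assumes fin: "finite T" and Rs: "R \<le> s" and dsub: "\<And>j. j \<in> T \<Longrightarrow> dis j \<subseteq> {..<s}"
    and cap: "\<And>D. D \<subseteq> {..<s} \<Longrightarrow> real (card {j\<in>T. dis j = D}) \<le> c"
  shows "real R * real (card T) - c * (\<Sum>d<R. real (s choose d) * (real R - real d))
         \<le> (\<Sum>j\<in>T. real (card (dis j)))"
proof -
  define h where "h d = max 0 (real R - real d)" for d :: nat
  have h0: "h d \<ge> 0" for d by (simp add: h_def)
  have "(\<Sum>j\<in>T. real R - h (card (dis j))) \<le> (\<Sum>j\<in>T. real (card (dis j)))"
    by (intro sum_mono) (simp add: h_def)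
  moreover have "(\<Sum>j\<in>T. real R - h (card (dis j))) = real R * real (card T) - (\<Sum>j\<in>T. h (card (dis j)))"
    by (simp add: sum_subtractf)
  moreover have "(\<Sum>j\<in>T. h (card (dis j))) \<le> c * (\<Sum>d<R. real (s choose d) * (real R - real d))"
  proof -
    have "(\<Sum>j\<in>T. h (card (dis j))) = (\<Sum>D\<in>Pow {..<s}. \<Sum>j\<in>{x. x \<in> T \<and> dis x = D}. h (card (dis j)))"
      using fin dsub by (intro sum.group[symmetric]) auto
    also have "\<dots> = (\<Sum>D\<in>Pow {..<s}. real (card {j\<in>T. dis j = D}) * h (card D))"
      by (intro sum.cong refl) simp
    also have "\<dots> \<le> (\<Sum>D\<in>Pow {..<s}. c * h (card D))"
      by (intro sum_mono mult_right_mono cap h0) auto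
    also have "\<dots> = c * (\<Sum>D\<in>Pow {..<s}. h (card D))" by (simp add: sum_distrib_left)
    also have "(\<Sum>D\<in>Pow {..<s}. h (card D)) = (\<Sum>d\<in>{..s}. \<Sum>D\<in>{x. x \<in> Pow {..<s} \<and> card x = d}. h (card D))"
      by (intro sum.group[symmetric]) (auto intro: card_mono[of "{..<s}", simplified])
    also have "\<dots> = (\<Sum>d\<in>{..s}. real (s choose d) * h d)"
    proof (intro sum.cong refl)
      fix d
      have "card {x. x \<in> Pow {..<s} \<and> card x = d} = s choose d"
        using n_subsets[of "{..<s}" d] by simp
      then show "(\<Sum>D\<in>{x. x \<in> Pow {..<s} \<and> card x = d}. h (card D)) = real (s choose d) * h d"
        by simp
    qed
    also have "\<dots> = (\<Sum>d\<in>{..<R}. real (s choose d) * h d)"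
      using Rs by (intro sum.mono_neutral_right) (auto simp: h_def)
    also have "\<dots> = (\<Sum>d<R. real (s choose d) * (real R - real d))"
      by (intro sum.cong refl) (auto simp: h_def)
    finally show ?thesis .
  qed
  ultimately show ?thesis by linarith
qed



lemma fibre_cap:
  fixes L s :: nat and W :: real
  assumes Abound: "\<And>ks bs. length ks = s \<Longrightarrow> distinct ks \<Longrightarrow> set ks \<subseteq> {..<L} \<Longrightarrow>
                   length bs = s \<Longrightarrow> real (card (Aset L a ks bs)) \<le> real L / 2 ^ s + W"
    and ks: "length ks = s" "distinct ks" "set ks \<subseteq> {..<L}" and T: "T \<subseteq> {..<L}"
    and D: "D \<subseteq> {..<s}"
  shows "real (card {j\<in>T. {i. i < s \<and> g j \<noteq> a (ks ! i) j} = D}) \<le> 2 * (real L / 2 ^ s + W)"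
proof -
  define A1 where "A1 = Aset L a ks (map (\<lambda>i. i \<notin> D) [0..<s])"
  define A2 where "A2 = Aset L a ks (map (\<lambda>i. i \<in> D) [0..<s])"
  have sub: "{j\<in>T. {i. i < s \<and> g j \<noteq> a (ks ! i) j} = D} \<subseteq> A1 \<union> A2"
  proof
    fix j assume j: "j \<in> {j\<in>T. {i. i < s \<and> g j \<noteq> a (ks ! i) j} = D}"
    then have jT: "j \<in> T" and eq: "\<And>i. i < s \<Longrightarrow> (i \<in> D) = (g j \<noteq> a (ks ! i) j)" by auto
    show "j \<in> A1 \<union> A2"
    proof (cases "g j")
      case True
      then have "j \<in> A1" using jT T eq ks(1) unfolding A1_def Aset_def by auto
      then show ?thesis by simp
    next
      case False
      then have "j \<in> A2" using jT T eq ks(1) unfolding A2_def Aset_def by auto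
      then show ?thesis by simp
    qed
  qed
  have fin: "finite A1" "finite A2" unfolding A1_def A2_def Aset_def by auto
  have "card {j\<in>T. {i. i < s \<and> g j \<noteq> a (ks ! i) j} = D} \<le> card (A1 \<union> A2)"
    using sub fin by (intro card_mono) auto
  also have "\<dots> \<le> card A1 + card A2" by (rule card_Un_le)
  finally have "real (card {j\<in>T. {i. i < s \<and> g j \<noteq> a (ks ! i) j} = D}) \<le> real (card A1) + real (card A2)"
    by linarith
  also have "\<dots> \<le> 2 * (real L / 2 ^ s + W)"
    using Abound[OF ks, of "map (\<lambda>i. i \<notin> D) [0..<s]"] Abound[OF ks, of "map (\<lambda>i. i \<in> D) [0..<s]"]
    unfolding A1_def A2_def by simp
  finally show ?thesis .
qed

lemma Pbin_R:
  assumes "r \<ge> -1"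
  shows "Pbin s r = (\<Sum>u<nat (r+1). real (s choose u)) / 2 ^ s"
proof (cases "r = -1")
  case True then show ?thesis by (simp add: Pbin_def)
next
  case False
  then have "r \<ge> 0" using assms by simp
  then have "{0..nat r} = {..<nat (r+1)}" by auto
  then show ?thesis using \<open>r \<ge> 0\<close> by (simp add: Pbin_def)
qed

lemma binsum_id:
  assumes "R \<le> s"
  shows "(\<Sum>d<R. real (s choose d) * (real R - real d))
      = real s * (\<Sum>d<R. real ((s - 1) choose d)) - real (s - R) * (\<Sum>d<R. real (s choose d))"
proof -
  have "(\<Sum>d<R. real (s choose d) * (real R - real d))
      = (\<Sum>d<R. real s * real ((s - 1) choose d) - real (s - R) * real (s choose d))"
  proof (intro sum.cong refl)
    fix d assume "d \<in> {..<R}"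
    then have dR: "d < R" by simp
    have "real ((s - d) * (s choose d)) = real (s * ((s - 1) choose d))"
      by (simp only: binomial_absorb_comp)
    then have "(real s - real d) * real (s choose d) = real s * real ((s - 1) choose d)"
      using dR assms by (simp add: of_nat_diff)
    then show "real (s choose d) * (real R - real d) = real s * real ((s - 1) choose d) - real (s - R) * real (s choose d)"
      using assms by (simp add: of_nat_diff algebra_simps)
  qed
  also have "\<dots> = real s * (\<Sum>d<R. real ((s - 1) choose d)) - real (s - R) * (\<Sum>d<R. real (s choose d))"
    by (simp add: sum_subtractf sum_distrib_left)
  finally show ?thesis .
qed



theorem corollary1:
  fixes L s :: nat and a :: "nat \<Rightarrow> nat \<Rightarrow> bool" and W \<gamma> :: real and r :: int
  assumes L_pos: "L > 0"
    and s_ge: "s \<ge> 2"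
    and W_nonneg: "W \<ge> 0"
    and Abound: "\<And>ks bs. length ks = s \<Longrightarrow> distinct ks \<Longrightarrow> set ks \<subseteq> {..<L} \<Longrightarrow>
                   length bs = s \<Longrightarrow> real (card (Aset L a ks bs)) \<le> real L / 2 ^ s + W"
    and gamma: "0 < \<gamma>" "\<gamma> < 1"
    and gammaL_int: "\<exists>m::nat. \<gamma> * real L = real m"
    and r_def: "Pbin s r \<le> (\<gamma> / (1 + 2 ^ s * W / real L)) / 2"
               "(\<gamma> / (1 + 2 ^ s * W / real L)) / 2 < Pbin s (r + 1)"
  shows "let L' = real L + 2 ^ s * W;
             \<gamma>' = \<gamma> / (1 + 2 ^ s * W / real L);
             nc = L' * (Pbin (s - 1) r + real_of_int (int s - r - 1) / real s * (\<gamma>' - 2 * Pbin s r))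
         in \<forall>T g. T \<subseteq> {..<L} \<longrightarrow> real (card T) = \<gamma> * real L \<longrightarrow>
              (\<forall>ks. length ks = s \<longrightarrow> distinct ks \<longrightarrow> set ks \<subseteq> {..<L} \<longrightarrow>
                  real (Min ((\<lambda>i. ncorr a T g (ks ! i)) ` {..<s})) \<le> nc)
            \<and> card {k \<in> {..<L}. real (ncorr a T g k) > nc} < s
            \<and> real (card {k \<in> {..<L}. real (ncorr a T g k) \<le> nc}) / real L \<ge> 1 - real s / real L"
proof -
  define K where "K = 1 + 2 ^ s * W / real L"
  define L' where "L' = real L + 2 ^ s * W"
  define \<gamma>' where "\<gamma>' = \<gamma> / K"
  define nc where "nc = L' * (Pbin (s - 1) r + real_of_int (int s - r - 1) / real s * (\<gamma>' - 2 * Pbin s r))"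
  have Lr: "real L > 0" using L_pos by simp
  have K1: "K \<ge> 1" unfolding K_def using W_nonneg Lr by simp
  have L'K: "L' = real L * K" unfolding L'_def K_def using Lr by (simp add: field_simps)
  have gL: "\<gamma>' * L' = \<gamma> * real L" unfolding \<gamma>'_def L'K using K1 by (simp add: field_simps)
  have g'pos: "\<gamma>' > 0" "\<gamma>' < 1" unfolding \<gamma>'_def using K1 gamma
    by (auto simp: field_simps)
  have rd1: "Pbin s r \<le> \<gamma>' / 2" and rd2: "\<gamma>' / 2 < Pbin s (r + 1)"
    using r_def unfolding \<gamma>'_def K_def by auto
  have rlo: "r \<ge> -1"
  proof (rule ccontr)
    assume "\<not> r \<ge> -1" then have "r + 1 < 0" by simp
    then have "Pbin s (r+1) = 0" by (simp add: Pbin_def)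
    with rd2 g'pos show False by simp
  qed
  have rhi: "r \<le> int s - 1"
  proof (rule ccontr)
    assume "\<not> r \<le> int s - 1" then have rs: "nat r \<ge> s" "r \<ge> 0" by auto
    have "(\<Sum>u\<le>s. real (s choose u)) \<le> (\<Sum>u\<in>{0..nat r}. real (s choose u))"
      using rs by (intro sum_mono2) auto
    moreover have "(\<Sum>u\<le>s. real (s choose u)) = 2 ^ s"
      using arg_cong[OF choose_row_sum[of s], of real] by (simp del: of_nat_sum add: of_nat_sum[symmetric])
    ultimately have "Pbin s r \<ge> 1" using rs by (simp add: Pbin_def)
    with rd1 g'pos show False by simp
  qed
  define R where "R = nat (r + 1)"
  define m where "m = s - R"
  have Rs: "R \<le> s" unfolding R_def using rhi by simp
  have mr: "real_of_int (int s - r - 1) = real m" unfolding m_def R_def using rlo rhi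
    by (simp add: of_nat_diff)
  define A where "A = (\<Sum>d<R. real (s choose d))"
  define B where "B = (\<Sum>d<R. real ((s - 1) choose d))"
  have PA: "Pbin s r = A / 2 ^ s" unfolding A_def R_def by (rule Pbin_R[OF rlo])
  have PB: "Pbin (s - 1) r = B / 2 ^ (s - 1)" unfolding B_def R_def by (rule Pbin_R[OF rlo])
  define c where "c = 2 * (real L / 2 ^ s + W)"
  have cL': "c = L' / 2 ^ (s - 1)"
  proof -
    have "(2::real) ^ s = 2 * 2 ^ (s - 1)" using s_ge
      by (cases s) auto
    then show ?thesis unfolding c_def L'_def by (simp add: field_simps)
  qed
  have sr: "real s > 0" using s_ge by simp
  have ncs: "real s * nc = real m * (\<gamma> * real L) + c * (real s * B - real m * A)"
  proof -
    have "real s * nc = L' * (real s * Pbin (s - 1) r) + real m * (\<gamma>' * L') - real m * (2 * L' * Pbin s r)"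
      unfolding nc_def mr using sr by (simp add: field_simps)
    also have "L' * (real s * Pbin (s - 1) r) = c * (real s * B)" unfolding PB cL' by simp
    also have "2 * L' * Pbin s r = c * A"
    proof -
      have "(2::real) ^ s = 2 * 2 ^ (s - 1)" using s_ge
        by (cases s) auto
      then show ?thesis unfolding PA cL' by (simp add: field_simps)
    qed
    finally show ?thesis unfolding gL by (simp add: algebra_simps)
  qed
  have part1: "real (Min ((\<lambda>i. ncorr a T g (ks ! i)) ` {..<s})) \<le> nc"
    if T: "T \<subseteq> {..<L}" "real (card T) = \<gamma> * real L" and ks: "length ks = s" "distinct ks" "set ks \<subseteq> {..<L}"
    for T g ks
  proof -
    have finT: "finite T" using T(1) finite_subset by blast
    define dis where "dis j = {i. i < s \<and> g j \<noteq> a (ks ! i) j}" for j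
    have cs: "(\<Sum>i<s. ncorr a T g (ks ! i)) + (\<Sum>j\<in>T. card (dis j)) = s * card T"
      unfolding dis_def by (rule count_split[OF finT])
    have db: "real R * real (card T) - c * (\<Sum>d<R. real (s choose d) * (real R - real d))
         \<le> (\<Sum>j\<in>T. real (card (dis j)))"
    proof (rule dis_bound[OF finT Rs])
      fix j assume "j \<in> T" then show "dis j \<subseteq> {..<s}" by (auto simp: dis_def)
    next
      fix D assume D: "D \<subseteq> {..<s}"
      show "real (card {j\<in>T. dis j = D}) \<le> c"
        unfolding dis_def c_def using fibre_cap[OF Abound ks T(1) D, of g] .
    qed
    have sumr: "real (\<Sum>i<s. ncorr a T g (ks ! i)) = real s * real (card T) - (\<Sum>j\<in>T. real (card (dis j)))"
    proof -
      have "real (\<Sum>i<s. ncorr a T g (ks ! i)) + real (\<Sum>j\<in>T. card (dis j)) = real s * real (card T)"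
        using arg_cong[OF cs, of real] by (simp only: of_nat_add of_nat_mult)
      moreover have "real (\<Sum>j\<in>T. card (dis j)) = (\<Sum>j\<in>T. real (card (dis j)))" by (rule of_nat_sum)
      ultimately show ?thesis by linarith
    qed
    have "real (\<Sum>i<s. ncorr a T g (ks ! i)) \<le> real s * nc"
    proof -
      have mR: "real m = real s - real R" unfolding m_def using Rs by (simp add: of_nat_diff)
      have db2: "real R * real (card T) - c * (real s * B - real m * A) \<le> (\<Sum>j\<in>T. real (card (dis j)))"
        using db unfolding binsum_id[OF Rs] A_def[symmetric] B_def[symmetric] m_def[symmetric] .
      have "real s * nc = real s * real (card T) - real R * real (card T) + c * (real s * B - real m * A)"
        unfolding ncs T(2) mR by (simp add: left_diff_distrib)
      then show ?thesis using sumr db2 by linarith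
    qed
    moreover have "real s * real (Min ((\<lambda>i. ncorr a T g (ks ! i)) ` {..<s})) \<le> real (\<Sum>i<s. ncorr a T g (ks ! i))"
    proof -
      have "(\<Sum>i<s. Min ((\<lambda>i. ncorr a T g (ks ! i)) ` {..<s})) \<le> (\<Sum>i<s. ncorr a T g (ks ! i))"
        by (intro sum_mono) simp
      then have "s * Min ((\<lambda>i. ncorr a T g (ks ! i)) ` {..<s}) \<le> (\<Sum>i<s. ncorr a T g (ks ! i))"
        by simp
      then show ?thesis by (metis of_nat_le_iff of_nat_mult)
    qed
    ultimately have "real s * real (Min ((\<lambda>i. ncorr a T g (ks ! i)) ` {..<s})) \<le> real s * nc" by linarith
    then show ?thesis using mult_le_cancel_left_pos[OF sr] by blast
  qed
  have part2: "card {k \<in> {..<L}. real (ncorr a T g k) > nc} < s"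
    if T: "T \<subseteq> {..<L}" "real (card T) = \<gamma> * real L" for T g
  proof (rule ccontr)
    define X where "X = {k \<in> {..<L}. real (ncorr a T g k) > nc}"
    assume "\<not> card {k \<in> {..<L}. real (ncorr a T g k) > nc} < s"
    then have "s \<le> card X" unfolding X_def by simp
    then obtain Y where Y: "Y \<subseteq> X" "card Y = s" using obtain_subset_with_card_n by metis
    have finY: "finite Y" using Y X_def finite_subset[of Y "{..<L}"] by auto
    define ks where "ks = sorted_list_of_set Y"
    have ks: "length ks = s" "distinct ks" "set ks \<subseteq> {..<L}"
      unfolding ks_def using finY Y X_def by auto
    have "Min ((\<lambda>i. ncorr a T g (ks ! i)) ` {..<s}) \<in> (\<lambda>i. ncorr a T g (ks ! i)) ` {..<s}"
      using s_ge by (intro Min_in) (auto simp: lessThan_empty_iff)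
    then obtain i where i: "i < s" "Min ((\<lambda>i. ncorr a T g (ks ! i)) ` {..<s}) = ncorr a T g (ks ! i)" by auto
    have "ks ! i \<in> X" using i(1) ks(1) Y(1) finY unfolding ks_def
      by (metis nth_mem set_sorted_list_of_set subsetD)
    then have "real (ncorr a T g (ks ! i)) > nc" unfolding X_def by simp
    with part1[OF T ks, of g] i show False by simp
  qed
  have part3: "real (card {k \<in> {..<L}. real (ncorr a T g k) \<le> nc}) / real L \<ge> 1 - real s / real L"
    if T: "T \<subseteq> {..<L}" "real (card T) = \<gamma> * real L" for T g
  proof -
    have "card {k \<in> {..<L}. real (ncorr a T g k) \<le> nc} + card {k \<in> {..<L}. real (ncorr a T g k) > nc}
        = card ({k \<in> {..<L}. real (ncorr a T g k) \<le> nc} \<union> {k \<in> {..<L}. real (ncorr a T g k) > nc})"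
      by (intro card_Un_disjoint[symmetric]) auto
    also have "{k \<in> {..<L}. real (ncorr a T g k) \<le> nc} \<union> {k \<in> {..<L}. real (ncorr a T g k) > nc} = {..<L}"
      by auto
    finally have "card {k \<in> {..<L}. real (ncorr a T g k) \<le> nc} + card {k \<in> {..<L}. real (ncorr a T g k) > nc} = L"
      by simp
    then have "real (card {k \<in> {..<L}. real (ncorr a T g k) \<le> nc}) \<ge> real L - real s"
      using part2[OF T, of g] by linarith
    then have "(real L - real s) / real L \<le> real (card {k \<in> {..<L}. real (ncorr a T g k) \<le> nc}) / real L"
      using Lr by (intro divide_right_mono) auto
    moreover have "(real L - real s) / real L = 1 - real s / real L" using Lr by (simp add: diff_divide_distrib)
    ultimately show ?thesis by simp
  qed
  show ?thesis
    unfolding Let_def K_def[symmetric] L'_def[symmetric] \<gamma>'_def[symmetric] nc_def[symmetric]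
    using part1 part2 part3 by blast
qed


end
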